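(* Consider a liquid ($l$), its vapor ($v$) and a gas ($g$), each with extensive entropy $S_k:(\mathbb R^+)^3\to\mathbb R\cup\{-\infty\}$ of $W_k=(M_k,V_k,E_k)$ satisfying: the set $C_k=\{S_k>-\infty\}$ is non-empty closed convex, $S_k$ is concave, positively homogeneous of degree 1, upper semi-continuous, and $\mathcal C^2$ on $C_k$ with $\partial S_k/\partial E>0$. Define for each phase the temperature $T_k$, pressure $p_k$ and chemical potential $\mu_k$ by $1/T_k=\partial S_k/\partial E$, $p_k/T_k=\partial S_k/\partial V$, $\mu_k=-T_k\,\partial S_k/\partial M$. Let $\Sigma=S_l(W_l)+S_g(W_g)+S_v(W_v)$. (a) Without phase transition: fix $(M,V,E)$ and $M_l,M_g,M_v\ge0$ with $M=M_l+M_g+M_v$, and suppose $\Sigma$ attains its maximum over the set $\{W_k\in C_k:\ E=E_l+E_g+E_v,\ V=V_l+V_v,\ V_g=V_v\}$ at a point lying in the interior of this constraint set (all three phases present). Then at this maximizer $T_l=T_g=T_v$ and $p_l=p_g+p_v$ (Dalton's law). (b) With phase transition: fix $(M,V,E)$ and $M_g$, and suppose $\Sigma$ attains its maximum over $\{W_k\in C_k:\ M-M_g=M_l+M_v,\ E=E_l+E_g+E_v,\ V=V_l+V_v,\ V_g=V_v\}$ at an interior point. Then at this maximizer $T_l=T_g=T_v$, $p_l=p_g+p_v$, and moreover $\mu_l=\mu_v$.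
   Context: The volume constraints $V=V_l+V_v$, $V_g=V_v$ encode that the vapor and gas are miscible (occupy the same volume) while the liquid is immiscible with them. The gas does not exchange mass with the other phases. *)

theory Defs
  imports "HOL-Analysis.Analysis"
begin

text \<open>States W = (M, V, E) :: real \<times> real \<times> real (mass, volume, energy).
  An entropy with values in real \<union> {-\<infinity>} is represented by its finiteness
  domain C = {S > -\<infinity>} together with a real-valued function s on C.\<close>

type_synonym state = "real \<times> real \<times> real"

definition ext_entropy :: "state set \<Rightarrow> (state \<Rightarrow> real) \<Rightarrow> state \<Rightarrow> ereal" where
  "ext_entropy C s W = (if W \<in> C then ereal (s W) else -\<infinity>)"

definition nonneg_orthant :: "state set" where
  "nonneg_orthant = {(M, V, E). 0 \<le> M \<and> 0 \<le> V \<and> 0 \<le> E}"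

definition C2_on :: "state set \<Rightarrow> (state \<Rightarrow> real) \<Rightarrow> bool" where
  "C2_on U f \<longleftrightarrow>
     (\<exists>(f' :: state \<Rightarrow> state \<Rightarrow>\<^sub>L real) (f'' :: state \<Rightarrow> state \<Rightarrow>\<^sub>L (state \<Rightarrow>\<^sub>L real)).
        (\<forall>x\<in>U. (f has_derivative blinfun_apply (f' x)) (at x)) \<and>
        (\<forall>x\<in>U. (f' has_derivative blinfun_apply (f'' x)) (at x)) \<and>
        continuous_on U f'')"

definition dS_dM :: "(state \<Rightarrow> real) \<Rightarrow> state \<Rightarrow> real" where
  "dS_dM s W = frechet_derivative s (at W) (1, 0, 0)"
definition dS_dV :: "(state \<Rightarrow> real) \<Rightarrow> state \<Rightarrow> real" where
  "dS_dV s W = frechet_derivative s (at W) (0, 1, 0)"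
definition dS_dE :: "(state \<Rightarrow> real) \<Rightarrow> state \<Rightarrow> real" where
  "dS_dE s W = frechet_derivative s (at W) (0, 0, 1)"

definition temperature :: "(state \<Rightarrow> real) \<Rightarrow> state \<Rightarrow> real" where
  "temperature s W = 1 / dS_dE s W"
definition pressure :: "(state \<Rightarrow> real) \<Rightarrow> state \<Rightarrow> real" where
  "pressure s W = temperature s W * dS_dV s W"
definition chem_potential :: "(state \<Rightarrow> real) \<Rightarrow> state \<Rightarrow> real" where
  "chem_potential s W = - temperature s W * dS_dM s W"

definition entropy :: "state set \<Rightarrow> (state \<Rightarrow> real) \<Rightarrow> bool" where
  "entropy C s \<longleftrightarrow>
     C \<noteq> {} \<and> closed C \<and> convex C \<and> C \<subseteq> nonneg_orthant \<and>
     concave_on C s \<and>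
     (\<forall>(c::real) W. c > 0 \<longrightarrow> ext_entropy C s (c *\<^sub>R W) = ereal c * ext_entropy C s W) \<and>
     (\<forall>W. Limsup (at W) (ext_entropy C s) \<le> ext_entropy C s W) \<and>
     C2_on (interior C) s \<and>
     (\<forall>W\<in>interior C. dS_dE s W > 0)"

end

theory Submission
  imports Defs
begin

lemma line_deriv:
  fixes s :: "state \<Rightarrow> real"
  assumes "(s has_derivative F) (at W)"
  shows "((\<lambda>t. s (W + t *\<^sub>R d)) has_real_derivative F d) (at 0)"
proof -
  have l: "bounded_linear F" using assms has_derivative_bounded_linear by blast
  have "((\<lambda>t. W + t *\<^sub>R d) has_derivative (\<lambda>t. t *\<^sub>R d)) (at 0)"
    by (auto intro!: derivative_eq_intros)
  moreover have "(s has_derivative F) (at (W + 0 *\<^sub>R d))" using assms by simp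
  ultimately have "((\<lambda>t. s (W + t *\<^sub>R d)) has_derivative (\<lambda>t. F (t *\<^sub>R d))) (at 0)"
    using diff_chain_at[of "\<lambda>t. W + t *\<^sub>R d" "\<lambda>t. t *\<^sub>R d" 0 s F] by (simp add: o_def)
  moreover have "(\<lambda>t. F (t *\<^sub>R d)) = (*) (F d)"
    using bounded_linear.linear[OF l] by (auto simp add: linear_cmul)
  ultimately show ?thesis by (simp add: has_field_derivative_def)
qed

lemma interior_line:
  fixes W :: state
  assumes "W \<in> interior C"
  shows "\<exists>\<delta>>0. \<forall>t. \<bar>t\<bar> < \<delta> \<longrightarrow> W + t *\<^sub>R d \<in> C"
proof -
  obtain e where e: "e > 0" "ball W e \<subseteq> C"
    using assms by (meson interior_subset mem_interior order_trans)
  show ?thesis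
  proof (intro exI[of _ "e / (norm d + 1)"] conjI allI impI)
    show "0 < e / (norm d + 1)" using e by (metis add_nonneg_pos divide_pos_pos norm_ge_zero zero_less_one)
    fix t :: real assume t: "\<bar>t\<bar> < e / (norm d + 1)"
    have "norm (t *\<^sub>R d) = \<bar>t\<bar> * norm d" by simp
    also have "\<dots> \<le> \<bar>t\<bar> * (norm d + 1)" by (simp add: mult_left_mono)
    also have "\<dots> < e"
    proof -
      have p: "norm d + 1 > 0" by (metis add_nonneg_pos norm_ge_zero zero_less_one)
      show ?thesis using t pos_less_divide_eq[OF p] by simp
    qed
    finally have "W + t *\<^sub>R d \<in> ball W e" by (simp add: dist_norm)
    then show "W + t *\<^sub>R d \<in> C" using e by blast
  qed
qed

lemma key:
  fixes s1 s2 s3 :: "state \<Rightarrow> real"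
  assumes i1: "W1 \<in> interior C1" and i2: "W2 \<in> interior C2" and i3: "W3 \<in> interior C3"
    and d1: "(s1 has_derivative F1) (at W1)" and d2: "(s2 has_derivative F2) (at W2)"
    and d3: "(s3 has_derivative F3) (at W3)"
    and mx: "\<forall>t. W1 + t *\<^sub>R a \<in> C1 \<and> W2 + t *\<^sub>R b \<in> C2 \<and> W3 + t *\<^sub>R c \<in> C3 \<longrightarrow>
       s1 (W1 + t *\<^sub>R a) + s2 (W2 + t *\<^sub>R b) + s3 (W3 + t *\<^sub>R c) \<le> s1 W1 + s2 W2 + s3 W3"
  shows "F1 a + F2 b + F3 c = 0"
proof -
  obtain e1 where e1: "e1 > 0" "\<forall>t. \<bar>t\<bar> < e1 \<longrightarrow> W1 + t *\<^sub>R a \<in> C1" using interior_line[OF i1] by blast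
  obtain e2 where e2: "e2 > 0" "\<forall>t. \<bar>t\<bar> < e2 \<longrightarrow> W2 + t *\<^sub>R b \<in> C2" using interior_line[OF i2] by blast
  obtain e3 where e3: "e3 > 0" "\<forall>t. \<bar>t\<bar> < e3 \<longrightarrow> W3 + t *\<^sub>R c \<in> C3" using interior_line[OF i3] by blast
  let ?g = "\<lambda>t. s1 (W1 + t *\<^sub>R a) + s2 (W2 + t *\<^sub>R b) + s3 (W3 + t *\<^sub>R c)"
  have D: "(?g has_real_derivative F1 a + F2 b + F3 c) (at 0)"
    by (intro DERIV_add line_deriv d1 d2 d3)
  have "\<forall>y. \<bar>0 - y\<bar> < min e1 (min e2 e3) \<longrightarrow> ?g y \<le> ?g 0"
    using mx e1 e2 e3 by simp
  then show ?thesis using DERIV_local_max[OF D, of "min e1 (min e2 e3)"] e1 e2 e3 by simp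
qed



lemma deriv_of:
  assumes "entropy C s" "W \<in> interior C"
  shows "(s has_derivative frechet_derivative s (at W)) (at W)"
proof -
  from assms(1) have "C2_on (interior C) s" by (simp add: entropy_def)
  then obtain f' :: "state \<Rightarrow> state \<Rightarrow>\<^sub>L real" where
    "\<forall>x\<in>interior C. (s has_derivative blinfun_apply (f' x)) (at x)"
    unfolding C2_on_def by blast
  then have "s differentiable at W" using assms(2) by (auto simp: differentiable_def)
  then show ?thesis using frechet_derivative_works by blast
qed

lemma lin_facts:
  assumes "(s has_derivative F) (at W)"
  shows "F (-x) = - F x" "F 0 = 0"
  using bounded_linear.linear[OF has_derivative_bounded_linear[OF assms]]
  by (auto simp: linear_neg linear_0)

theorem proposition2p2:
  fixes Cl Cg Cv :: "state set" and sl sg sv :: "state \<Rightarrow> real"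
  assumes "entropy Cl sl" and "entropy Cg sg" and "entropy Cv sv"
  shows
   "(\<forall>M V E Ml Mg Mv Vl Vg Vv El Eg Ev.
       0 \<le> Ml \<and> 0 \<le> Mg \<and> 0 \<le> Mv \<and> M = Ml + Mg + Mv \<and>
       (Ml, Vl, El) \<in> Cl \<and> (Mg, Vg, Eg) \<in> Cg \<and> (Mv, Vv, Ev) \<in> Cv \<and>
       E = El + Eg + Ev \<and> V = Vl + Vv \<and> Vg = Vv \<and>
       (\<forall>Vl' Vg' Vv' El' Eg' Ev'.
          (Ml, Vl', El') \<in> Cl \<and> (Mg, Vg', Eg') \<in> Cg \<and> (Mv, Vv', Ev') \<in> Cv \<and>
          E = El' + Eg' + Ev' \<and> V = Vl' + Vv' \<and> Vg' = Vv' \<longrightarrow>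
          sl (Ml, Vl', El') + sg (Mg, Vg', Eg') + sv (Mv, Vv', Ev')
            \<le> sl (Ml, Vl, El) + sg (Mg, Vg, Eg) + sv (Mv, Vv, Ev)) \<and>
       (Ml, Vl, El) \<in> interior Cl \<and> (Mg, Vg, Eg) \<in> interior Cg \<and> (Mv, Vv, Ev) \<in> interior Cv
     \<longrightarrow>
       temperature sl (Ml, Vl, El) = temperature sg (Mg, Vg, Eg) \<and>
       temperature sg (Mg, Vg, Eg) = temperature sv (Mv, Vv, Ev) \<and>
       pressure sl (Ml, Vl, El) = pressure sg (Mg, Vg, Eg) + pressure sv (Mv, Vv, Ev))
  \<and>
   (\<forall>M V E Mg Ml Mv Vl Vg Vv El Eg Ev.
       (Ml, Vl, El) \<in> Cl \<and> (Mg, Vg, Eg) \<in> Cg \<and> (Mv, Vv, Ev) \<in> Cv \<and>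
       M - Mg = Ml + Mv \<and> E = El + Eg + Ev \<and> V = Vl + Vv \<and> Vg = Vv \<and>
       (\<forall>Ml' Mv' Vl' Vg' Vv' El' Eg' Ev'.
          (Ml', Vl', El') \<in> Cl \<and> (Mg, Vg', Eg') \<in> Cg \<and> (Mv', Vv', Ev') \<in> Cv \<and>
          M - Mg = Ml' + Mv' \<and> E = El' + Eg' + Ev' \<and> V = Vl' + Vv' \<and> Vg' = Vv' \<longrightarrow>
          sl (Ml', Vl', El') + sg (Mg, Vg', Eg') + sv (Mv', Vv', Ev')
            \<le> sl (Ml, Vl, El) + sg (Mg, Vg, Eg) + sv (Mv, Vv, Ev)) \<and>
       (Ml, Vl, El) \<in> interior Cl \<and> (Mg, Vg, Eg) \<in> interior Cg \<and> (Mv, Vv, Ev) \<in> interior Cv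
     \<longrightarrow>
       temperature sl (Ml, Vl, El) = temperature sg (Mg, Vg, Eg) \<and>
       temperature sg (Mg, Vg, Eg) = temperature sv (Mv, Vv, Ev) \<and>
       pressure sl (Ml, Vl, El) = pressure sg (Mg, Vg, Eg) + pressure sv (Mv, Vv, Ev) \<and>
       chem_potential sl (Ml, Vl, El) = chem_potential sv (Mv, Vv, Ev))"
proof -
  have A: "temperature sl (Ml, Vl, El) = temperature sg (Mg, Vg, Eg) \<and>
       temperature sg (Mg, Vg, Eg) = temperature sv (Mv, Vv, Ev) \<and>
       pressure sl (Ml, Vl, El) = pressure sg (Mg, Vg, Eg) + pressure sv (Mv, Vv, Ev)"
    if Vv: "Vg = Vv" and
       mx: "\<forall>Vl' Vg' Vv' El' Eg' Ev'.
          (Ml, Vl', El') \<in> Cl \<and> (Mg, Vg', Eg') \<in> Cg \<and> (Mv, Vv', Ev') \<in> Cv \<and>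
          El + Eg + Ev = El' + Eg' + Ev' \<and> Vl + Vv = Vl' + Vv' \<and> Vg' = Vv' \<longrightarrow>
          sl (Ml, Vl', El') + sg (Mg, Vg', Eg') + sv (Mv, Vv', Ev')
            \<le> sl (Ml, Vl, El) + sg (Mg, Vg, Eg) + sv (Mv, Vv, Ev)"
      and il: "(Ml, Vl, El) \<in> interior Cl" and ig: "(Mg, Vg, Eg) \<in> interior Cg"
      and iv: "(Mv, Vv, Ev) \<in> interior Cv"
    for Ml Mg Mv Vl Vg Vv El Eg Ev
  proof -
    let ?Fl = "frechet_derivative sl (at (Ml, Vl, El))"
    let ?Fg = "frechet_derivative sg (at (Mg, Vg, Eg))"
    let ?Fv = "frechet_derivative sv (at (Mv, Vv, Ev))"
    have dl: "(sl has_derivative ?Fl) (at (Ml, Vl, El))" by (rule deriv_of[OF assms(1) il])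
    have dg: "(sg has_derivative ?Fg) (at (Mg, Vg, Eg))" by (rule deriv_of[OF assms(2) ig])
    have dv: "(sv has_derivative ?Fv) (at (Mv, Vv, Ev))" by (rule deriv_of[OF assms(3) iv])
    have e1: "?Fl (0,0,1) + ?Fg (-(0,0,1)) + ?Fv 0 = 0"
    proof (rule key[OF il ig iv dl dg dv], intro allI impI)
      fix t :: real
      assume "(Ml, Vl, El) + t *\<^sub>R (0,0,1) \<in> Cl \<and> (Mg, Vg, Eg) + t *\<^sub>R (-(0,0,1)) \<in> Cg \<and> (Mv, Vv, Ev) + t *\<^sub>R 0 \<in> Cv"
      then show "sl ((Ml, Vl, El) + t *\<^sub>R (0,0,1)) + sg ((Mg, Vg, Eg) + t *\<^sub>R (-(0,0,1))) + sv ((Mv, Vv, Ev) + t *\<^sub>R 0) \<le> sl (Ml, Vl, El) + sg (Mg, Vg, Eg) + sv (Mv, Vv, Ev)"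
        using mx[rule_format, of Vl "El + t" Vg "Eg - t" Vv Ev] Vv by simp
    qed
    have e2: "?Fl 0 + ?Fg (0,0,1) + ?Fv (-(0,0,1)) = 0"
    proof (rule key[OF il ig iv dl dg dv], intro allI impI)
      fix t :: real
      assume "(Ml, Vl, El) + t *\<^sub>R 0 \<in> Cl \<and> (Mg, Vg, Eg) + t *\<^sub>R (0,0,1) \<in> Cg \<and> (Mv, Vv, Ev) + t *\<^sub>R (-(0,0,1)) \<in> Cv"
      then show "sl ((Ml, Vl, El) + t *\<^sub>R 0) + sg ((Mg, Vg, Eg) + t *\<^sub>R (0,0,1)) + sv ((Mv, Vv, Ev) + t *\<^sub>R (-(0,0,1))) \<le> sl (Ml, Vl, El) + sg (Mg, Vg, Eg) + sv (Mv, Vv, Ev)"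
        using mx[rule_format, of Vl El Vg "Eg + t" Vv "Ev - t"] Vv by simp
    qed
    have e3: "?Fl (-(0,1,0)) + ?Fg (0,1,0) + ?Fv (0,1,0) = 0"
    proof (rule key[OF il ig iv dl dg dv], intro allI impI)
      fix t :: real
      assume "(Ml, Vl, El) + t *\<^sub>R (-(0,1,0)) \<in> Cl \<and> (Mg, Vg, Eg) + t *\<^sub>R (0,1,0) \<in> Cg \<and> (Mv, Vv, Ev) + t *\<^sub>R (0,1,0) \<in> Cv"
      then show "sl ((Ml, Vl, El) + t *\<^sub>R (-(0,1,0))) + sg ((Mg, Vg, Eg) + t *\<^sub>R (0,1,0)) + sv ((Mv, Vv, Ev) + t *\<^sub>R (0,1,0)) \<le> sl (Ml, Vl, El) + sg (Mg, Vg, Eg) + sv (Mv, Vv, Ev)"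
        using mx[rule_format, of "Vl - t" El "Vg + t" Eg "Vv + t" Ev] Vv by simp
    qed
    have E1: "?Fl (0,0,1) = ?Fg (0,0,1)" using e1 lin_facts(1)[OF dg, of "(0,0,1)"] lin_facts[OF dv] by simp
    have E2: "?Fg (0,0,1) = ?Fv (0,0,1)" using e2 lin_facts[OF dl] lin_facts(1)[OF dv, of "(0,0,1)"] by simp
    have E3: "?Fl (0,1,0) = ?Fg (0,1,0) + ?Fv (0,1,0)" using e3 lin_facts(1)[OF dl, of "(0,1,0)"] by simp
    show ?thesis using E1 E2 E3
      by (simp add: temperature_def pressure_def dS_dE_def dS_dV_def ring_distribs)
  qed
  show ?thesis
  proof (rule conjI; intro allI impI)
    fix M V E Ml Mg Mv Vl Vg Vv El Eg Ev
    assume h: "0 \<le> Ml \<and> 0 \<le> Mg \<and> 0 \<le> Mv \<and> M = Ml + Mg + Mv \<and>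
       (Ml, Vl, El) \<in> Cl \<and> (Mg, Vg, Eg) \<in> Cg \<and> (Mv, Vv, Ev) \<in> Cv \<and>
       E = El + Eg + Ev \<and> V = Vl + Vv \<and> Vg = Vv \<and>
       (\<forall>Vl' Vg' Vv' El' Eg' Ev'.
          (Ml, Vl', El') \<in> Cl \<and> (Mg, Vg', Eg') \<in> Cg \<and> (Mv, Vv', Ev') \<in> Cv \<and>
          E = El' + Eg' + Ev' \<and> V = Vl' + Vv' \<and> Vg' = Vv' \<longrightarrow>
          sl (Ml, Vl', El') + sg (Mg, Vg', Eg') + sv (Mv, Vv', Ev')
            \<le> sl (Ml, Vl, El) + sg (Mg, Vg, Eg) + sv (Mv, Vv, Ev)) \<and>
       (Ml, Vl, El) \<in> interior Cl \<and> (Mg, Vg, Eg) \<in> interior Cg \<and> (Mv, Vv, Ev) \<in> interior Cv"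
    show "temperature sl (Ml, Vl, El) = temperature sg (Mg, Vg, Eg) \<and>
       temperature sg (Mg, Vg, Eg) = temperature sv (Mv, Vv, Ev) \<and>
       pressure sl (Ml, Vl, El) = pressure sg (Mg, Vg, Eg) + pressure sv (Mv, Vv, Ev)"
      using A[where Ml=Ml and Mg=Mg and Mv=Mv and Vl=Vl and Vg=Vg and Vv=Vv and El=El and Eg=Eg and Ev=Ev] h by auto
  next
    fix M V E Mg Ml Mv Vl Vg Vv El Eg Ev
    assume h: "(Ml, Vl, El) \<in> Cl \<and> (Mg, Vg, Eg) \<in> Cg \<and> (Mv, Vv, Ev) \<in> Cv \<and>
       M - Mg = Ml + Mv \<and> E = El + Eg + Ev \<and> V = Vl + Vv \<and> Vg = Vv \<and>
       (\<forall>Ml' Mv' Vl' Vg' Vv' El' Eg' Ev'.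
          (Ml', Vl', El') \<in> Cl \<and> (Mg, Vg', Eg') \<in> Cg \<and> (Mv', Vv', Ev') \<in> Cv \<and>
          M - Mg = Ml' + Mv' \<and> E = El' + Eg' + Ev' \<and> V = Vl' + Vv' \<and> Vg' = Vv' \<longrightarrow>
          sl (Ml', Vl', El') + sg (Mg, Vg', Eg') + sv (Mv', Vv', Ev')
            \<le> sl (Ml, Vl, El) + sg (Mg, Vg, Eg) + sv (Mv, Vv, Ev)) \<and>
       (Ml, Vl, El) \<in> interior Cl \<and> (Mg, Vg, Eg) \<in> interior Cg \<and> (Mv, Vv, Ev) \<in> interior Cv"
    have il: "(Ml, Vl, El) \<in> interior Cl" and ig: "(Mg, Vg, Eg) \<in> interior Cg"
      and iv: "(Mv, Vv, Ev) \<in> interior Cv" using h by auto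
    have T: "temperature sl (Ml, Vl, El) = temperature sg (Mg, Vg, Eg) \<and>
       temperature sg (Mg, Vg, Eg) = temperature sv (Mv, Vv, Ev) \<and>
       pressure sl (Ml, Vl, El) = pressure sg (Mg, Vg, Eg) + pressure sv (Mv, Vv, Ev)"
      using A[where Ml=Ml and Mg=Mg and Mv=Mv and Vl=Vl and Vg=Vg and Vv=Vv and El=El and Eg=Eg and Ev=Ev] h by auto
    let ?Fl = "frechet_derivative sl (at (Ml, Vl, El))"
    let ?Fg = "frechet_derivative sg (at (Mg, Vg, Eg))"
    let ?Fv = "frechet_derivative sv (at (Mv, Vv, Ev))"
    have dl: "(sl has_derivative ?Fl) (at (Ml, Vl, El))" by (rule deriv_of[OF assms(1) il])
    have dg: "(sg has_derivative ?Fg) (at (Mg, Vg, Eg))" by (rule deriv_of[OF assms(2) ig])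
    have dv: "(sv has_derivative ?Fv) (at (Mv, Vv, Ev))" by (rule deriv_of[OF assms(3) iv])
    have e4: "?Fl (1,0,0) + ?Fg 0 + ?Fv (-(1,0,0)) = 0"
    proof (rule key[OF il ig iv dl dg dv], intro allI impI)
      fix t :: real
      assume "(Ml, Vl, El) + t *\<^sub>R (1,0,0) \<in> Cl \<and> (Mg, Vg, Eg) + t *\<^sub>R 0 \<in> Cg \<and> (Mv, Vv, Ev) + t *\<^sub>R (-(1,0,0)) \<in> Cv"
      then show "sl ((Ml, Vl, El) + t *\<^sub>R (1,0,0)) + sg ((Mg, Vg, Eg) + t *\<^sub>R 0) + sv ((Mv, Vv, Ev) + t *\<^sub>R (-(1,0,0))) \<le> sl (Ml, Vl, El) + sg (Mg, Vg, Eg) + sv (Mv, Vv, Ev)"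
        using h by (auto intro!: h[THEN conjunct2, THEN conjunct2, THEN conjunct2, THEN conjunct2, THEN conjunct2, THEN conjunct2, THEN conjunct2, THEN conjunct1, rule_format, of "Ml + t" Vl El Vg Eg "Mv - t" Vv Ev, simplified])
    qed
    have E4: "?Fl (1,0,0) = ?Fv (1,0,0)" using e4 lin_facts[OF dg] lin_facts(1)[OF dv, of "(1,0,0)"] by simp
    show "temperature sl (Ml, Vl, El) = temperature sg (Mg, Vg, Eg) \<and>
       temperature sg (Mg, Vg, Eg) = temperature sv (Mv, Vv, Ev) \<and>
       pressure sl (Ml, Vl, El) = pressure sg (Mg, Vg, Eg) + pressure sv (Mv, Vv, Ev) \<and>
       chem_potential sl (Ml, Vl, El) = chem_potential sv (Mv, Vv, Ev)"
      using T E4 by (simp add: chem_potential_def dS_dM_def)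
  qed
qed

end
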